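(* Let $(\mathcal{S},\mathcal{R})$ be a complete positive presentation satisfying: (C) $\mathcal{R}$ contains no relation of the form $su=sv$ or $us=vs$ with $s\in\mathcal{S}$, $u,v\in\mathcal{S}^*$ and $u\neq v$; (E$_r$) there exists a set $\mathcal{S}'$ with $\mathcal{S}\subseteq\mathcal{S}'\subseteq\mathcal{S}^*$ such that for all $u,v\in\mathcal{S}'$ there exist $u',v'\in\mathcal{S}'$ satisfying $(uv')^{-1}(vu')\curvearrowright_r\varepsilon$. Then for every word $\mathbf{w}$ on $\mathcal{S}\cup\mathcal{S}^{-1}$ the following are equivalent: (i) $\mathbf{w}\equiv^{\pm}\varepsilon$; (ii) there exist $u,v\in\mathcal{S}^*$ with $\mathbf{w}\curvearrowright_r vu^{-1}$ and $u^{-1}v\curvearrowright_r\varepsilon$; (iii) there exist $u,v\in\mathcal{S}^*$ with $\mathbf{w}\curvearrowright_r vu^{-1}$ and $vu^{-1}\curvearrowright_l\varepsilon$.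
   Context: A positive presentation is a pair $(\mathcal{S},\mathcal{R})$ where $\mathcal{S}$ is a nonempty set of letters and $\mathcal{R}$ is a family of relations $u=v$, i.e. unordered pairs $\{u,v\}$ of nonempty words in the free monoid $\mathcal{S}^*$ (letters are regarded as length-one words). $\varepsilon$ denotes the empty word; $\equiv$ is the smallest congruence on $\mathcal{S}^*$ containing all pairs of $\mathcal{R}$. Let $\mathcal{S}^{-1}=\{s^{-1}:s\in\mathcal{S}\}$ be a disjoint copy of $\mathcal{S}$; $\equiv^{\pm}$ is the smallest congruence on $(\mathcal{S}\cup\mathcal{S}^{-1})^*$ containing all pairs of $\mathcal{R}$ and all pairs $\{ss^{-1},\varepsilon\}$, $\{s^{-1}s,\varepsilon\}$ for $s\in\mathcal{S}$. For $u\in\mathcal{S}^*$, $u^{-1}$ is obtained by reversing the order of the letters of $u$ and replacing each $s$ by $s^{-1}$. Right reversing: $\mathbf{w}\curvearrowright_r\mathbf{w}'$ (words on $\mathcal{S}\cup\mathcal{S}^{-1}$) if $\mathbf{w}'$ is obtained from $\mathbf{w}$ by finitely many steps, each deleting a subword $u^{-1}u$ ($u\in\mathcal{S}^*$ nonempty) or replacing a subword $u^{-1}v$ ($u,v\in\mathcal{S}^*$ nonempty) by $v'u'^{-1}$ where $uv'=vu'$ is a relation of $\mathcal{R}$. Left reversing: $\mathbf{w}\curvearrowright_l\mathbf{w}'$ if $\mathbf{w}'$ is obtained by finitely many steps, each deleting a subword $uu^{-1}$ ($u$ nonempty) or replacing a subword $uv^{-1}$ ($u,v$ nonempty) by $v'^{-1}u'$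 where $v'u=u'v$ is a relation of $\mathcal{R}$. $(\mathcal{S},\mathcal{R})$ is $r$-complete if for all $u,v,u',v'\in\mathcal{S}^*$ with $uv'\equiv vu'$ there exist $u'',v'',w\in\mathcal{S}^*$ with $u^{-1}v\curvearrowright_r v''u''^{-1}$, $u'\equiv u''w$, $v'\equiv v''w$; it is $l$-complete if for all $u,v,u',v'$ with $v'u\equiv u'v$ there exist $u'',v'',w$ with $uv^{-1}\curvearrowright_l v''^{-1}u''$, $u'\equiv wu''$, $v'\equiv wv''$; it is complete if it is both. *)

theory Defs
  imports Main
begin

text \<open>Letters of type 'a. A signed letter is a pair (s, b): b = True means s, b = False means s^-1.
  A relation u = v of a presentation is an unordered pair, represented by R containing (u,v) or (v,u).\<close>

type_synonym 'a sword = "('a \<times> bool) list"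

definition pos :: "'a list \<Rightarrow> 'a sword" where
  "pos u = map (\<lambda>s. (s, True)) u"

definition ninv :: "'a list \<Rightarrow> 'a sword" where
  "ninv u = rev (map (\<lambda>s. (s, False)) u)"

definition is_rel :: "('a list \<times> 'a list) set \<Rightarrow> 'a list \<Rightarrow> 'a list \<Rightarrow> bool" where
  "is_rel R u v \<longleftrightarrow> (u, v) \<in> R \<or> (v, u) \<in> R"

definition positive_presentation :: "'a set \<Rightarrow> ('a list \<times> 'a list) set \<Rightarrow> bool" where
  "positive_presentation S R \<longleftrightarrow> S \<noteq> {} \<and>
     (\<forall>(u, v) \<in> R. u \<noteq> [] \<and> v \<noteq> [] \<and> set u \<subseteq> S \<and> set v \<subseteq> S)"

inductive equivp :: "('a list \<times> 'a list) set \<Rightarrow> 'a list \<Rightarrow> 'a list \<Rightarrow> bool" for R where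
  eq_refl: "equivp R u u"
| eq_sym: "equivp R u v \<Longrightarrow> equivp R v u"
| eq_trans: "equivp R u v \<Longrightarrow> equivp R v w \<Longrightarrow> equivp R u w"
| eq_rel: "(u, v) \<in> R \<Longrightarrow> equivp R (x @ u @ y) (x @ v @ y)"

inductive equivpm :: "'a set \<Rightarrow> ('a list \<times> 'a list) set \<Rightarrow> 'a sword \<Rightarrow> 'a sword \<Rightarrow> bool" for S R where
  eqpm_refl: "equivpm S R w w"
| eqpm_sym: "equivpm S R w w' \<Longrightarrow> equivpm S R w' w"
| eqpm_trans: "equivpm S R w w' \<Longrightarrow> equivpm S R w' w'' \<Longrightarrow> equivpm S R w w''"
| eqpm_rel: "(u, v) \<in> R \<Longrightarrow> equivpm S R (x @ pos u @ y) (x @ pos v @ y)"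
| eqpm_cancel1: "s \<in> S \<Longrightarrow> equivpm S R (x @ [(s, True), (s, False)] @ y) (x @ y)"
| eqpm_cancel2: "s \<in> S \<Longrightarrow> equivpm S R (x @ [(s, False), (s, True)] @ y) (x @ y)"

inductive rrev1 :: "'a set \<Rightarrow> ('a list \<times> 'a list) set \<Rightarrow> 'a sword \<Rightarrow> 'a sword \<Rightarrow> bool" for S R where
  rrev_del: "u \<noteq> [] \<Longrightarrow> set u \<subseteq> S \<Longrightarrow> rrev1 S R (x @ ninv u @ pos u @ y) (x @ y)"
| rrev_rel: "u \<noteq> [] \<Longrightarrow> v \<noteq> [] \<Longrightarrow> is_rel R (u @ v') (v @ u') \<Longrightarrow>
     rrev1 S R (x @ ninv u @ pos v @ y) (x @ pos v' @ ninv u' @ y)"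

definition rrev :: "'a set \<Rightarrow> ('a list \<times> 'a list) set \<Rightarrow> 'a sword \<Rightarrow> 'a sword \<Rightarrow> bool" where
  "rrev S R = (rrev1 S R)\<^sup>*\<^sup>*"

inductive lrev1 :: "'a set \<Rightarrow> ('a list \<times> 'a list) set \<Rightarrow> 'a sword \<Rightarrow> 'a sword \<Rightarrow> bool" for S R where
  lrev_del: "u \<noteq> [] \<Longrightarrow> set u \<subseteq> S \<Longrightarrow> lrev1 S R (x @ pos u @ ninv u @ y) (x @ y)"
| lrev_rel: "u \<noteq> [] \<Longrightarrow> v \<noteq> [] \<Longrightarrow> is_rel R (v' @ u) (u' @ v) \<Longrightarrow>
     lrev1 S R (x @ pos u @ ninv v @ y) (x @ ninv v' @ pos u' @ y)"

definition lrev :: "'a set \<Rightarrow> ('a list \<times> 'a list) set \<Rightarrow> 'a sword \<Rightarrow> 'a sword \<Rightarrow> bool" where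
  "lrev S R = (lrev1 S R)\<^sup>*\<^sup>*"

definition r_complete :: "'a set \<Rightarrow> ('a list \<times> 'a list) set \<Rightarrow> bool" where
  "r_complete S R \<longleftrightarrow> (\<forall>u v u' v'. set u \<subseteq> S \<and> set v \<subseteq> S \<and> set u' \<subseteq> S \<and> set v' \<subseteq> S \<and>
      equivp R (u @ v') (v @ u') \<longrightarrow>
      (\<exists>u'' v'' w. set u'' \<subseteq> S \<and> set v'' \<subseteq> S \<and> set w \<subseteq> S \<and>
         rrev S R (ninv u @ pos v) (pos v'' @ ninv u'') \<and>
         equivp R u' (u'' @ w) \<and> equivp R v' (v'' @ w)))"

definition l_complete :: "'a set \<Rightarrow> ('a list \<times> 'a list) set \<Rightarrow> bool" where
  "l_complete S R \<longleftrightarrow> (\<forall>u v u' v'. set u \<subseteq> S \<and> set v \<subseteq> S \<and> set u' \<subseteq> S \<and> set v' \<subseteq> S \<and>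
      equivp R (v' @ u) (u' @ v) \<longrightarrow>
      (\<exists>u'' v'' w. set u'' \<subseteq> S \<and> set v'' \<subseteq> S \<and> set w \<subseteq> S \<and>
         lrev S R (pos u @ ninv v) (ninv v'' @ pos u'') \<and>
         equivp R u' (w @ u'') \<and> equivp R v' (w @ v'')))"

definition complete :: "'a set \<Rightarrow> ('a list \<times> 'a list) set \<Rightarrow> bool" where
  "complete S R \<longleftrightarrow> r_complete S R \<and> l_complete S R"

definition cond_C :: "'a set \<Rightarrow> ('a list \<times> 'a list) set \<Rightarrow> bool" where
  "cond_C S R \<longleftrightarrow> (\<forall>s u v. s \<in> S \<and> set u \<subseteq> S \<and> set v \<subseteq> S \<and> u \<noteq> v \<longrightarrow>
      \<not> is_rel R (s # u) (s # v) \<and> \<not> is_rel R (u @ [s]) (v @ [s]))"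

definition cond_Er :: "'a set \<Rightarrow> ('a list \<times> 'a list) set \<Rightarrow> bool" where
  "cond_Er S R \<longleftrightarrow> (\<exists>S'. (\<forall>s \<in> S. [s] \<in> S') \<and> (\<forall>u \<in> S'. set u \<subseteq> S) \<and>
      (\<forall>u \<in> S'. \<forall>v \<in> S'. \<exists>u' \<in> S'. \<exists>v' \<in> S'.
          rrev S R (ninv (u @ v') @ pos (v @ u')) []))"

end

theory Submission
  imports Defs
begin


lemma eq_cong: "equivp R a b \<Longrightarrow> equivp R (x @ a @ y) (x @ b @ y)"
proof (induction rule: equivp.induct)
  case (eq_refl u) then show ?case by (metis equivp.eq_refl)
next
  case (eq_sym u v) then show ?case by (metis equivp.eq_sym)
next
  case (eq_trans u v w) then show ?case by (metis equivp.eq_trans)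
next
  case (eq_rel u v x0 y0)
  then show ?case using equivp.eq_rel[of u v R "x @ x0" "y0 @ y"] by simp
qed

lemma eq_app2: "equivp R a b \<Longrightarrow> equivp R c d \<Longrightarrow> equivp R (a @ c) (b @ d)"
  using eq_cong[of R a b "[]" c] eq_cong[of R c d b "[]"] by (simp add: equivp.eq_trans)

lemma eq_appL: "equivp R a b \<Longrightarrow> equivp R (x @ a) (x @ b)"
  using eq_cong[of R a b x "[]"] by simp

lemma eq_appR: "equivp R a b \<Longrightarrow> equivp R (a @ y) (b @ y)"
  using eq_cong[of R a b "[]" y] by simp

lemma eq_nil: "equivp R a b \<Longrightarrow> positive_presentation S R \<Longrightarrow> (a = [] \<longleftrightarrow> b = [])"
proof (induction rule: equivp.induct)
  case (eq_rel u v x y)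
  then show ?case unfolding positive_presentation_def by fastforce
qed auto

lemma ninv_app[simp]: "ninv (x @ y) = ninv y @ ninv x" by (simp add: ninv_def)
lemma pos_app[simp]: "pos (x @ y) = pos x @ pos y" by (simp add: pos_def)
lemma ninv_simps[simp]: "ninv [] = []" "ninv (s # u) = ninv u @ [(s, False)]" by (simp_all add: ninv_def)
lemma pos_simps[simp]: "pos [] = []" "pos (s # u) = (s, True) # pos u" by (simp_all add: pos_def)
lemma len_pos[simp]: "length (pos u) = length u" by (simp add: pos_def)
lemma len_ninv[simp]: "length (ninv u) = length u" by (simp add: ninv_def)
lemma snd_pos[simp]: "map snd (pos u) = replicate (length u) True" by (induction u) (auto simp: pos_def)
lemma snd_ninv[simp]: "map snd (ninv u) = replicate (length u) False" by (induction u) (auto simp: ninv_def replicate_append_same)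
lemma fst_pos[simp]: "map fst (pos u) = u" by (simp add: pos_def comp_def)
lemma fst_ninv[simp]: "map fst (ninv u) = rev u" by (simp add: ninv_def rev_map comp_def)
lemma fstset_pos[simp]: "fst ` set (pos u) = set u" by (simp add: pos_def image_image)
lemma fstset_ninv[simp]: "fst ` set (ninv u) = set u" by (simp add: ninv_def image_image)

lemma pos_inj: "pos a = pos b \<Longrightarrow> a = b" using fst_pos by metis
lemma ninv_inj: "ninv a = ninv b \<Longrightarrow> a = b" using fst_ninv by (metis rev_rev_ident)

lemma pn_uniq: "pos a @ ninv b = pos c @ ninv d \<Longrightarrow> a = c \<and> b = d"
proof -
  assume h: "pos a @ ninv b = pos c @ ninv d"
  have "map snd (pos a @ ninv b) = map snd (pos c @ ninv d)" using h by simp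
  hence r: "replicate (length a) True @ replicate (length b) False = replicate (length c) True @ replicate (length d) False" by simp
  have "length a = length c"
  proof (rule ccontr)
    assume "length a \<noteq> length c"
    then consider "length a < length c" | "length c < length a" by linarith
    then show False
    proof cases
      case 1
      have "(replicate (length a) True @ replicate (length b) False) ! length a = (replicate (length c) True @ replicate (length d) False) ! length a" by (rule arg_cong[OF r])
      moreover have "length a < length a + length b" proof -
        have "length a + length b = length c + length d" using arg_cong[OF r, of length] by simp
        thus ?thesis using 1 by linarith
      qed
      ultimately show False using 1 by (simp add: nth_append)
    next
      case 2
      have "(replicate (length a) True @ replicate (length b) False) ! length c = (replicate (length c) True @ replicate (length d) False) ! length c" by (rule arg_cong[OF r])
      moreover have "length c < length c + length d" proof -
        have "length a + length b = length c + length d" using arg_cong[OF r, of length] by simp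
        thus ?thesis using 2 by linarith
      qed
      ultimately show False using 2 by (simp add: nth_append)
    qed
  qed
  then have "pos a = pos c \<and> ninv b = ninv d" using h by (simp add: append_eq_append_conv)
  then show ?thesis by (blast dest: pos_inj ninv_inj)
qed

lemma np_uniq: "ninv a @ pos b = ninv c @ pos d \<Longrightarrow> a = c \<and> b = d"
proof -
  assume h: "ninv a @ pos b = ninv c @ pos d"
  have "map snd (ninv a @ pos b) = map snd (ninv c @ pos d)" using h by simp
  hence r: "replicate (length a) False @ replicate (length b) True = replicate (length c) False @ replicate (length d) True" by simp
  have "length a = length c"
  proof (rule ccontr)
    assume "length a \<noteq> length c"
    then consider "length a < length c" | "length c < length a" by linarith
    then show False
    proof cases
      case 1
      have "(replicate (length a) False @ replicate (length b) True) ! length a = (replicate (length c) False @ replicate (length d) True) ! length a" by (rule arg_cong[OF r])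
      moreover have "length a < length a + length b" proof -
        have "length a + length b = length c + length d" using arg_cong[OF r, of length] by simp
        thus ?thesis using 1 by linarith
      qed
      ultimately show False using 1 by (simp add: nth_append)
    next
      case 2
      have "(replicate (length a) False @ replicate (length b) True) ! length c = (replicate (length c) False @ replicate (length d) True) ! length c" by (rule arg_cong[OF r])
      moreover have "length c < length c + length d" proof -
        have "length a + length b = length c + length d" using arg_cong[OF r, of length] by simp
        thus ?thesis using 2 by linarith
      qed
      ultimately show False using 2 by (simp add: nth_append)
    qed
  qed
  then have "ninv a = ninv c \<and> pos b = pos d" using h by (simp add: append_eq_append_conv)
  then show ?thesis by (blast dest: pos_inj ninv_inj)
qed

lemma no_FT: "x @ False # True # y = replicate m True @ replicate n False \<Longrightarrow> False"
proof (induction x arbitrary: m)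
  case Nil
  show ?case
  proof (cases m)
    case 0
    have e: "False # True # y = replicate n False" using Nil.prems unfolding 0 by (simp only: append_Nil replicate_0)
    have "True \<in> set (replicate n False)" unfolding e[symmetric] by simp
    then show ?thesis by simp
  next
    case (Suc k)
    have e: "False # True # y = True # (replicate k True @ replicate n False)" using Nil.prems unfolding Suc by (simp only: append_Nil replicate_Suc append_Cons)
    then show ?thesis by (simp only: list.inject simp_thms)
  qed
next
  case (Cons a x)
  show ?case
  proof (cases m)
    case 0
    have e: "a # x @ False # True # y = replicate n False" using Cons.prems unfolding 0 by (simp only: append_Nil replicate_0 append_Cons)
    have "True \<in> set (replicate n False)" unfolding e[symmetric] by simp
    then show ?thesis by simp
  next
    case (Suc k)
    have e: "a # x @ False # True # y = True # (replicate k True @ replicate n False)" using Cons.prems unfolding Suc by (simp only: append_Nil replicate_Suc append_Cons)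
    then have "x @ False # True # y = replicate k True @ replicate n False" by (simp only: list.inject)
    then show ?thesis by (rule Cons.IH)
  qed
qed

lemma no_TF: "x @ True # False # y = replicate m False @ replicate n True \<Longrightarrow> False"
proof (induction x arbitrary: m)
  case Nil
  show ?case
  proof (cases m)
    case 0
    have e: "True # False # y = replicate n True" using Nil.prems unfolding 0 by (simp only: append_Nil replicate_0)
    have "False \<in> set (replicate n True)" unfolding e[symmetric] by simp
    then show ?thesis by simp
  next
    case (Suc k)
    have e: "True # False # y = False # (replicate k False @ replicate n True)" using Nil.prems unfolding Suc by (simp only: append_Nil replicate_Suc append_Cons)
    then show ?thesis by (simp only: list.inject simp_thms)
  qed
next
  case (Cons a x)
  show ?case
  proof (cases m)
    case 0
    have e: "a # x @ True # False # y = replicate n True" using Cons.prems unfolding 0 by (simp only: append_Nil replicate_0 append_Cons)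
    have "False \<in> set (replicate n True)" unfolding e[symmetric] by simp
    then show ?thesis by simp
  next
    case (Suc k)
    have e: "a # x @ True # False # y = False # (replicate k False @ replicate n True)" using Cons.prems unfolding Suc by (simp only: append_Nil replicate_Suc append_Cons)
    then have "x @ True # False # y = replicate k False @ replicate n True" by (simp only: list.inject)
    then show ?thesis by (rule Cons.IH)
  qed
qed

lemma nonempty_split: "u \<noteq> [] \<Longrightarrow> \<exists>u0 a. u = u0 @ [a]" by (metis rev_exhaust)
lemma nonempty_split2: "u \<noteq> [] \<Longrightarrow> \<exists>u0 a. u = a # u0" by (metis list.exhaust)

lemma rrev1_pn: assumes "rrev1 S R (pos a @ ninv b) z" shows False
  using assms
proof (cases rule: rrev1.cases)
  case (rrev_del u x y)
  obtain u0 c where u: "u = c # u0" using rrev_del nonempty_split2 by blast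
  have "map snd (pos a @ ninv b) = map snd (x @ ninv u @ pos u @ y)" using rrev_del by simp
  hence "(map snd x @ replicate (length u0) False) @ False # True # replicate (length u0) True @ map snd y
     = replicate (length a) True @ replicate (length b) False" using u by (simp add: replicate_app_Cons_same)
  then show False by (rule no_FT)
next
  case (rrev_rel u v v' u' x y)
  obtain u0 c where u: "u = c # u0" using rrev_rel nonempty_split2 by blast
  obtain v0 d where v: "v = d # v0" using rrev_rel nonempty_split2 by blast
  have "map snd (pos a @ ninv b) = map snd (x @ ninv u @ pos v @ y)" using rrev_rel by simp
  hence "(map snd x @ replicate (length u0) False) @ False # True # replicate (length v0) True @ map snd y
     = replicate (length a) True @ replicate (length b) False" using u v by (simp add: replicate_app_Cons_same)
  then show False by (rule no_FT)
qed

lemma lrev1_np: assumes "lrev1 S R (ninv a @ pos b) z" shows False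
  using assms
proof (cases rule: lrev1.cases)
  case (lrev_del u x y)
  obtain u0 c where u: "u = u0 @ [c]" using lrev_del nonempty_split by blast
  have "map snd (ninv a @ pos b) = map snd (x @ pos u @ ninv u @ y)" using lrev_del by simp
  hence "(map snd x @ replicate (length u0) True) @ True # False # replicate (length u0) False @ map snd y
     = replicate (length a) False @ replicate (length b) True" using u by (simp add: replicate_app_Cons_same)
  then show False by (rule no_TF)
next
  case (lrev_rel u v v' u' x y)
  obtain u0 c where u: "u = u0 @ [c]" using lrev_rel nonempty_split by blast
  obtain v0 d where v: "v = v0 @ [d]" using lrev_rel nonempty_split by blast
  have "map snd (ninv a @ pos b) = map snd (x @ pos u @ ninv v @ y)" using lrev_rel by simp
  hence "(map snd x @ replicate (length u0) True) @ True # False # replicate (length v0) False @ map snd y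
     = replicate (length a) False @ replicate (length b) True" using u v by (simp add: replicate_app_Cons_same)
  then show False by (rule no_TF)
qed

lemma rrev_pn: "rrev S R (pos a @ ninv b) z \<Longrightarrow> z = pos a @ ninv b"
  unfolding rrev_def by (erule converse_rtranclpE) (auto dest: rrev1_pn)

lemma lrev_np: "lrev S R (ninv a @ pos b) z \<Longrightarrow> z = ninv a @ pos b"
  unfolding lrev_def by (erule converse_rtranclpE) (auto dest: lrev1_np)



fun Path :: "('a list \<times> 'a list) set \<Rightarrow> 'a sword \<Rightarrow> 'a list \<Rightarrow> 'a list \<Rightarrow> bool" where
  "Path R [] x y = equivp R x y"
| "Path R ((s, b) # w) x y = (if b then (\<exists>z. equivp R z (x @ [s]) \<and> Path R w z y)
                                 else (\<exists>z. equivp R x (z @ [s]) \<and> Path R w z y))"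

lemma Path_left: "Path R w x y \<Longrightarrow> equivp R x' x \<Longrightarrow> Path R w x' y"
proof (induction w arbitrary: x x')
  case Nil then show ?case by (auto intro: equivp.eq_trans)
next
  case (Cons l w)
  obtain s b where l: "l = (s, b)" by fastforce
  show ?case
  proof (cases b)
    case True
    then obtain z where "equivp R z (x @ [s])" "Path R w z y" using Cons l by auto
    moreover have "equivp R (x @ [s]) (x' @ [s])" using Cons.prems(2) by (simp add: eq_appR equivp.eq_sym)
    ultimately show ?thesis using l True by (auto intro: equivp.eq_trans)
  next
    case False
    then obtain z where "equivp R x (z @ [s])" "Path R w z y" using Cons l by auto
    then show ?thesis using l False Cons.prems(2) by (auto intro: equivp.eq_trans)
  qed
qed

lemma Path_app: "Path R (w1 @ w2) x y \<longleftrightarrow> (\<exists>z. Path R w1 x z \<and> Path R w2 z y)"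
proof (induction w1 arbitrary: x)
  case Nil
  show ?case
  proof
    assume "Path R ([] @ w2) x y"
    then show "\<exists>z. Path R [] x z \<and> Path R w2 z y" by (auto intro: equivp.eq_refl)
  next
    assume "\<exists>z. Path R [] x z \<and> Path R w2 z y"
    then obtain z where "equivp R x z" "Path R w2 z y" by auto
    then show "Path R ([] @ w2) x y" using Path_left by auto
  qed
next
  case (Cons l w)
  obtain s b where l: "l = (s, b)" by fastforce
  then show ?case using Cons by (cases b) auto
qed

lemma Path_pos: "Path R (pos v) z b \<longleftrightarrow> equivp R b (z @ v)"
proof (induction v arbitrary: z)
  case Nil then show ?case by (auto intro: equivp.eq_sym)
next
  case (Cons s v)
  show ?case
  proof
    assume "Path R (pos (s # v)) z b"
    then obtain z' where "equivp R z' (z @ [s])" "equivp R b (z' @ v)" using Cons by auto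
    then show "equivp R b (z @ s # v)" using eq_appR[of R z' "z @ [s]" v] by (auto intro: equivp.eq_trans)
  next
    assume "equivp R b (z @ s # v)"
    then show "Path R (pos (s # v)) z b" using Cons by (auto intro!: exI[of _ "z @ [s]"] equivp.eq_refl)
  qed
qed

lemma Path_ninv: "Path R (ninv u) a z \<longleftrightarrow> equivp R a (z @ u)"
proof (induction u arbitrary: a rule: rev_induct)
  case Nil then show ?case by simp
next
  case (snoc s u)
  have e: "ninv (u @ [s]) = (s, False) # ninv u" by (simp add: ninv_def)
  show ?case
  proof
    assume "Path R (ninv (u @ [s])) a z"
    then obtain z' where "equivp R a (z' @ [s])" "equivp R z' (z @ u)" using snoc e by auto
    then show "equivp R a (z @ u @ [s])" using eq_appR[of R z' "z @ u" "[s]"] by (auto intro: equivp.eq_trans)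
  next
    assume "equivp R a (z @ u @ [s])"
    then show "Path R (ninv (u @ [s])) a z" using snoc e by (auto intro!: exI[of _ "z @ u"] equivp.eq_refl)
  qed
qed

lemma rel_equiv: "is_rel R a b \<Longrightarrow> equivp R a b"
  unfolding is_rel_def using equivp.eq_rel[of a b R "[]" "[]"] equivp.eq_rel[of b a R "[]" "[]"]
  by (auto intro: equivp.eq_sym)

lemma Path_rrev1: "rrev1 S R w w' \<Longrightarrow> Path R w x y \<Longrightarrow> Path R w' x y"
proof (induction rule: rrev1.induct)
  case (rrev_del u x0 y0)
  then obtain z1 z2 z3 where h: "Path R x0 x z1" "equivp R z1 (z2 @ u)" "equivp R z3 (z2 @ u)" "Path R y0 z3 y"
    by (auto simp: Path_app Path_pos Path_ninv)
  have "equivp R z1 z3" using h(2,3) by (meson equivp.eq_sym equivp.eq_trans)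
  then have "Path R y0 z1 y" using h(4) Path_left by blast
  then show ?case using h(1) by (auto simp: Path_app)
next
  case (rrev_rel u v v' u' x0 y0)
  then obtain z1 z2 z3 where h: "Path R x0 x z1" "equivp R z1 (z2 @ u)" "equivp R z3 (z2 @ v)" "Path R y0 z3 y"
    by (auto simp: Path_app Path_pos Path_ninv)
  have e: "equivp R (u @ v') (v @ u')" using rrev_rel rel_equiv by blast
  have "equivp R (z1 @ v') (z2 @ u @ v')" using h(2) eq_appR by fastforce
  moreover have "equivp R (z2 @ u @ v') (z2 @ v @ u')" using e eq_appL by blast
  ultimately have A: "equivp R (z1 @ v') (z2 @ v @ u')" by (rule equivp.eq_trans)
  have B: "equivp R (z3 @ u') (z2 @ v @ u')" using h(3) eq_appR by fastforce
  have P1: "Path R (pos v') z1 (z1 @ v')" by (simp add: Path_pos equivp.eq_refl)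
  have "equivp R (z1 @ v') (z3 @ u')" using A B by (meson equivp.eq_sym equivp.eq_trans)
  then have P2: "Path R (ninv u') (z1 @ v') z3" by (simp add: Path_ninv)
  have "Path R (pos v' @ ninv u') z1 z3" using P1 P2 Path_app by blast
  then show ?case using h(1,4) by (auto simp: Path_app)
qed

lemma Path_rrev: "rrev S R w w' \<Longrightarrow> Path R w x y \<Longrightarrow> Path R w' x y"
  unfolding rrev_def by (induction rule: rtranclp_induct) (auto dest: Path_rrev1)

lemma rrev_sound_pos: "rrev S R (ninv a @ pos b) (pos b' @ ninv a') \<Longrightarrow> equivp R (a @ b') (b @ a')"
proof -
  assume r: "rrev S R (ninv a @ pos b) (pos b' @ ninv a')"
  have "Path R (ninv a @ pos b) a b" by (auto simp: Path_app Path_pos Path_ninv intro!: exI[of _ "[]"] equivp.eq_refl)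
  then have "Path R (pos b' @ ninv a') a b" using Path_rrev r by blast
  then obtain z where "equivp R z (a @ b')" "equivp R z (b @ a')" by (auto simp: Path_app Path_pos Path_ninv)
  then show ?thesis by (meson equivp.eq_sym equivp.eq_trans)
qed



lemma pm_cong: "equivpm S R a b \<Longrightarrow> equivpm S R (x @ a @ y) (x @ b @ y)"
proof (induction rule: equivpm.induct)
  case (eqpm_refl w) then show ?case by (metis equivpm.eqpm_refl)
next
  case (eqpm_sym w w') then show ?case by (metis equivpm.eqpm_sym)
next
  case (eqpm_trans w w' w'') then show ?case by (metis equivpm.eqpm_trans)
next
  case (eqpm_rel u v x0 y0)
  then show ?case using equivpm.eqpm_rel[of u v R S "x @ x0" "y0 @ y"] by simp
next
  case (eqpm_cancel1 s x0 y0)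
  then show ?case using equivpm.eqpm_cancel1[of s S R "x @ x0" "y0 @ y"] by simp
next
  case (eqpm_cancel2 s x0 y0)
  then show ?case using equivpm.eqpm_cancel2[of s S R "x @ x0" "y0 @ y"] by simp
qed

lemma pm_ctx: "equivpm S R a b \<Longrightarrow> w1 = x @ a @ y \<Longrightarrow> w2 = x @ b @ y \<Longrightarrow> equivpm S R w1 w2"
  using pm_cong by blast

lemma pm_pos: "equivp R a b \<Longrightarrow> equivpm S R (pos a) (pos b)"
proof (induction rule: equivp.induct)
  case (eq_refl u) then show ?case by (metis equivpm.eqpm_refl)
next
  case (eq_sym u v) then show ?case by (metis equivpm.eqpm_sym)
next
  case (eq_trans u v w) then show ?case by (metis equivpm.eqpm_trans)
next
  case (eq_rel u v x y)
  then show ?case using equivpm.eqpm_rel[of u v R S "pos x" "pos y"] by simp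
qed

lemma pm_np: "set u \<subseteq> S \<Longrightarrow> equivpm S R (ninv u @ pos u) []"
proof (induction u)
  case Nil then show ?case by (simp add: equivpm.eqpm_refl)
next
  case (Cons s u)
  have "equivpm S R (ninv u @ [(s, False), (s, True)] @ pos u) (ninv u @ pos u)"
    using Cons.prems by (intro equivpm.eqpm_cancel2) auto
  then show ?case using Cons by (auto intro: equivpm.eqpm_trans)
qed

lemma pm_pn: "set u \<subseteq> S \<Longrightarrow> equivpm S R (pos u @ ninv u) []"
proof (induction u rule: rev_induct)
  case Nil then show ?case by (simp add: equivpm.eqpm_refl)
next
  case (snoc s u)
  have "equivpm S R (pos u @ [(s, True), (s, False)] @ ninv u) (pos u @ ninv u)"
    using snoc.prems by (intro equivpm.eqpm_cancel1) auto
  then show ?case using snoc by (auto intro: equivpm.eqpm_trans simp: ninv_def pos_def)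
qed

lemma pp_sets: "positive_presentation S R \<Longrightarrow> is_rel R a b \<Longrightarrow> set a \<subseteq> S \<and> set b \<subseteq> S \<and> a \<noteq> [] \<and> b \<noteq> []"
  unfolding positive_presentation_def is_rel_def by auto

lemma rrev1_sound: assumes pp: "positive_presentation S R" and r: "rrev1 S R w w'" shows "equivpm S R w w'"
  using r
proof (induction rule: rrev1.induct)
  case (rrev_del u x y)
  then show ?case using pm_ctx[OF pm_np[of u S R], of _ x y] by simp
next
  case (rrev_rel u v v' u' x y)
  have st: "set u \<subseteq> S" "set v \<subseteq> S" "set u' \<subseteq> S" "set v' \<subseteq> S" using pp_sets[OF pp rrev_rel(3)] by auto
  have e: "equivp R (v @ u') (u @ v')" using rel_equiv[OF rrev_rel(3)] by (rule equivp.eq_sym)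
  have 1: "equivpm S R (ninv u @ pos v) (ninv u @ pos v @ pos u' @ ninv u')"
    using pm_ctx[OF pm_pn[OF st(3)], of _ "ninv u @ pos v" "[]"] by (auto intro: equivpm.eqpm_sym)
  have 2: "equivpm S R (ninv u @ pos v @ pos u' @ ninv u') (ninv u @ pos u @ pos v' @ ninv u')"
    using pm_ctx[OF pm_pos[OF e, of S], of _ "ninv u" "ninv u'"] by simp
  have 3: "equivpm S R (ninv u @ pos u @ pos v' @ ninv u') (pos v' @ ninv u')"
    using pm_ctx[OF pm_np[OF st(1)], of _ "[]" "pos v' @ ninv u'"] by simp
  have main: "equivpm S R (ninv u @ pos v) (pos v' @ ninv u')" using 1 2 3 by (meson equivpm.eqpm_trans)
  show ?case using pm_cong[OF main, of x y] by simp
qed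

lemma lrev1_sound: assumes pp: "positive_presentation S R" and r: "lrev1 S R w w'" shows "equivpm S R w w'"
  using r
proof (induction rule: lrev1.induct)
  case (lrev_del u x y)
  then show ?case using pm_ctx[OF pm_pn[of u S R], of _ x y] by simp
next
  case (lrev_rel u v v' u' x y)
  have st: "set v' \<subseteq> S" "set u \<subseteq> S" "set u' \<subseteq> S" "set v \<subseteq> S" using pp_sets[OF pp lrev_rel(3)] by auto
  have e: "equivp R (v' @ u) (u' @ v)" using rel_equiv[OF lrev_rel(3)] .
  have 1: "equivpm S R (pos u @ ninv v) (ninv v' @ pos v' @ pos u @ ninv v)"
    using pm_ctx[OF pm_np[OF st(1)], of _ "[]" "pos u @ ninv v"] by (auto intro: equivpm.eqpm_sym)
  have 2: "equivpm S R (ninv v' @ pos v' @ pos u @ ninv v) (ninv v' @ pos u' @ pos v @ ninv v)"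
    using pm_ctx[OF pm_pos[OF e, of S], of _ "ninv v'" "ninv v"] by simp
  have 3: "equivpm S R (ninv v' @ pos u' @ pos v @ ninv v) (ninv v' @ pos u')"
    using pm_ctx[OF pm_pn[OF st(4)], of _ "ninv v' @ pos u'" "[]"] by simp
  have main: "equivpm S R (pos u @ ninv v) (ninv v' @ pos u')" using 1 2 3 by (meson equivpm.eqpm_trans)
  show ?case using pm_cong[OF main, of x y] by simp
qed

lemma rrev_sound: "positive_presentation S R \<Longrightarrow> rrev S R w w' \<Longrightarrow> equivpm S R w w'"
  unfolding rrev_def by (erule rtranclp_induct) (auto intro: equivpm.eqpm_refl equivpm.eqpm_trans rrev1_sound)

lemma lrev_sound: "positive_presentation S R \<Longrightarrow> lrev S R w w' \<Longrightarrow> equivpm S R w w'"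
  unfolding lrev_def by (erule rtranclp_induct) (auto intro: equivpm.eqpm_refl equivpm.eqpm_trans lrev1_sound)

lemma rrev1_ctx: "rrev1 S R a b \<Longrightarrow> rrev1 S R (x @ a @ y) (x @ b @ y)"
proof (induction rule: rrev1.induct)
  case (rrev_del u x0 y0)
  then show ?case using rrev1.rrev_del[of u S R "x @ x0" "y0 @ y"] by simp
next
  case (rrev_rel u v v' u' x0 y0)
  then show ?case using rrev1.rrev_rel[of u v R v' u' S "x @ x0" "y0 @ y"] by simp
qed

lemma rrev_ctx: "rrev S R a b \<Longrightarrow> rrev S R (x @ a @ y) (x @ b @ y)"
  unfolding rrev_def by (erule rtranclp_induct) (auto intro: rtranclp.rtrancl_into_rtrancl rrev1_ctx)

lemma rrev_trans: "rrev S R a b \<Longrightarrow> rrev S R b c \<Longrightarrow> rrev S R a c"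
  unfolding rrev_def by auto



lemma rstep1:
  assumes pp: "positive_presentation S R" and C: "cond_C S R" and s: "s \<in> S"
    and r: "rrev1 S R [(s, False), (s, True)] W"
  shows "\<exists>t. W = pos t @ ninv t"
  using r
proof (cases rule: rrev1.cases)
  case (rrev_del u x y)
  have "length x + length u + length u + length y = 2" using arg_cong[OF rrev_del(1), of length] by simp
  then have "x = [] \<and> y = []" using rrev_del(3) by (cases u) auto
  then show ?thesis using rrev_del by (auto intro!: exI[of _ "[]"])
next
  case (rrev_rel u v v' u' x y)
  have L: "length x + length u + length v + length y = 2" using arg_cong[OF rrev_rel(1), of length] by simp
  obtain a u0 where u: "u = a # u0" using rrev_rel(3) by (cases u) auto
  obtain b v0 where v: "v = b # v0" using rrev_rel(4) by (cases v) auto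
  have "x = [] \<and> y = [] \<and> u0 = [] \<and> v0 = []" using L u v by auto
  then have xy: "x = []" "y = []" "u = [a]" "v = [b]" using u v by auto
  then have ab: "a = s" "b = s" using rrev_rel(1) by auto
  have st: "set v' \<subseteq> S" "set u' \<subseteq> S" using pp_sets[OF pp rrev_rel(5)] by auto
  have "v' = u'" using C rrev_rel(5) s st xy ab unfolding cond_C_def by force
  then show ?thesis using rrev_rel xy by auto
qed

lemma lstep1:
  assumes pp: "positive_presentation S R" and C: "cond_C S R" and s: "s \<in> S"
    and r: "lrev1 S R [(s, True), (s, False)] W"
  shows "\<exists>t. W = ninv t @ pos t"
  using r
proof (cases rule: lrev1.cases)
  case (lrev_del u x y)
  have "length x + length u + length u + length y = 2" using arg_cong[OF lrev_del(1), of length] by simp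
  then have "x = [] \<and> y = []" using lrev_del(3) by (cases u) auto
  then show ?thesis using lrev_del by (auto intro!: exI[of _ "[]"])
next
  case (lrev_rel u v v' u' x y)
  have L: "length x + length u + length v + length y = 2" using arg_cong[OF lrev_rel(1), of length] by simp
  obtain a u0 where u: "u = a # u0" using lrev_rel(3) by (cases u) auto
  obtain b v0 where v: "v = b # v0" using lrev_rel(4) by (cases v) auto
  have "x = [] \<and> y = [] \<and> u0 = [] \<and> v0 = []" using L u v by auto
  then have xy: "x = []" "y = []" "u = [a]" "v = [b]" using u v by auto
  then have ab: "a = s" "b = s" using lrev_rel(1) by auto
  have st: "set v' \<subseteq> S" "set u' \<subseteq> S" using pp_sets[OF pp lrev_rel(5)] by auto
  have "v' = u'" using C lrev_rel(5) s st xy ab unfolding cond_C_def by force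
  then show ?thesis using lrev_rel xy by auto
qed

lemma lcancel1:
  assumes pp: "positive_presentation S R" and rc: "r_complete S R" and C: "cond_C S R"
    and s: "s \<in> S" and x: "set x \<subseteq> S" and y: "set y \<subseteq> S" and e: "equivp R (s # x) (s # y)"
  shows "equivp R x y"
proof -
  obtain u'' v'' w where h: "rrev S R (ninv [s] @ pos [s]) (pos v'' @ ninv u'')"
      "equivp R y (u'' @ w)" "equivp R x (v'' @ w)"
    using rc s x y e unfolding r_complete_def
    by (metis append_Cons append_Nil empty_subsetI insert_subset list.set(1) list.set(2))
  have "u'' = v''"
  proof -
    have h2: "(rrev1 S R)\<^sup>*\<^sup>* [(s, False), (s, True)] (pos v'' @ ninv u'')" using h(1) by (simp add: rrev_def)
    then show ?thesis
    proof (cases rule: converse_rtranclpE)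
      case base
      then have "map snd ([] @ [(s, False), (s, True)]) = map snd (pos v'' @ ninv u'')" by simp
      then have "[] @ False # True # [] = replicate (length v'') True @ replicate (length u'') False" by simp
      then show ?thesis using no_FT by blast
    next
      case (step W)
      obtain t where "W = pos t @ ninv t" using rstep1[OF pp C s step(1)] by blast
      then have "pos v'' @ ninv u'' = pos t @ ninv t" using step(2) rrev_pn unfolding rrev_def by metis
      then show ?thesis using pn_uniq by metis
    qed
  qed
  then show ?thesis using h by (meson equivp.eq_sym equivp.eq_trans)
qed

lemma rcancel1:
  assumes pp: "positive_presentation S R" and lc: "l_complete S R" and C: "cond_C S R"
    and s: "s \<in> S" and x: "set x \<subseteq> S" and y: "set y \<subseteq> S" and e: "equivp R (x @ [s]) (y @ [s])"
  shows "equivp R x y"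
proof -
  obtain u'' v'' w where h: "lrev S R (pos [s] @ ninv [s]) (ninv v'' @ pos u'')"
      "equivp R y (w @ u'')" "equivp R x (w @ v'')"
    using lc s x y e unfolding l_complete_def
    by (metis empty_subsetI insert_subset list.set(1) list.set(2))
  have "u'' = v''"
  proof -
    have h2: "(lrev1 S R)\<^sup>*\<^sup>* [(s, True), (s, False)] (ninv v'' @ pos u'')" using h(1) by (simp add: lrev_def)
    then show ?thesis
    proof (cases rule: converse_rtranclpE)
      case base
      then have "map snd ([] @ [(s, True), (s, False)]) = map snd (ninv v'' @ pos u'')" by simp
      then have "[] @ True # False # [] = replicate (length v'') False @ replicate (length u'') True" by simp
      then show ?thesis using no_TF by blast
    next
      case (step W)
      obtain t where "W = ninv t @ pos t" using lstep1[OF pp C s step(1)] by blast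
      then have "ninv v'' @ pos u'' = ninv t @ pos t" using step(2) lrev_np unfolding lrev_def by metis
      then show ?thesis using np_uniq by metis
    qed
  qed
  then show ?thesis using h by (meson equivp.eq_sym equivp.eq_trans)
qed

lemma lcancel:
  assumes pp: "positive_presentation S R" and rc: "r_complete S R" and C: "cond_C S R"
  shows "set z \<subseteq> S \<Longrightarrow> set x \<subseteq> S \<Longrightarrow> set y \<subseteq> S \<Longrightarrow> equivp R (z @ x) (z @ y) \<Longrightarrow> equivp R x y"
proof (induction z)
  case Nil then show ?case by simp
next
  case (Cons s z)
  then show ?case using lcancel1[OF pp rc C, of s "z @ x" "z @ y"] by simp
qed

lemma rcancel:
  assumes pp: "positive_presentation S R" and lc: "l_complete S R" and C: "cond_C S R"
  shows "set z \<subseteq> S \<Longrightarrow> set x \<subseteq> S \<Longrightarrow> set y \<subseteq> S \<Longrightarrow> equivp R (x @ z) (y @ z) \<Longrightarrow> equivp R x y"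
proof (induction z rule: rev_induct)
  case Nil then show ?case by simp
next
  case (snoc s z)
  then show ?case using rcancel1[OF pp lc C, of s "x @ z" "y @ z"] by simp
qed

lemma oreA:
  assumes S1: "\<forall>s \<in> S. [s] \<in> S'" and S2: "\<forall>u \<in> S'. set u \<subseteq> S"
    and S3: "\<forall>u \<in> S'. \<forall>v \<in> S'. \<exists>u' \<in> S'. \<exists>v' \<in> S'. equivp R (u @ v') (v @ u')"
  shows "a \<in> S' \<Longrightarrow> set v \<subseteq> S \<Longrightarrow> \<exists>a' \<in> S'. \<exists>v''. set v'' \<subseteq> S \<and> equivp R (a @ v'') (v @ a')"
proof (induction v arbitrary: a)
  case Nil then show ?case by (auto intro!: exI[of _ "[]"] equivp.eq_refl)
next
  case (Cons s v)
  obtain a1 v1 where a1: "a1 \<in> S'" "v1 \<in> S'" "equivp R (a @ v1) ([s] @ a1)" using S3 S1 Cons.prems by force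
  obtain a' v2 where a': "a' \<in> S'" "set v2 \<subseteq> S" "equivp R (a1 @ v2) (v @ a')" using Cons.IH[OF a1(1)] Cons.prems(2) by auto
  have "equivp R (a @ v1 @ v2) ([s] @ a1 @ v2)" using eq_appR[OF a1(3), of v2] by simp
  moreover have "equivp R ([s] @ a1 @ v2) ([s] @ v @ a')" using eq_appL[OF a'(3), of "[s]"] by simp
  ultimately have "equivp R (a @ v1 @ v2) ((s # v) @ a')" by (auto intro: equivp.eq_trans)
  moreover have "set (v1 @ v2) \<subseteq> S" using a1 a' S2 by auto
  ultimately show ?case using a' by (metis append.assoc)
qed

lemma oreB:
  assumes S1: "\<forall>s \<in> S. [s] \<in> S'" and S2: "\<forall>u \<in> S'. set u \<subseteq> S"
    and S3: "\<forall>u \<in> S'. \<forall>v \<in> S'. \<exists>u' \<in> S'. \<exists>v' \<in> S'. equivp R (u @ v') (v @ u')"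
  shows "set u \<subseteq> S \<Longrightarrow> set v \<subseteq> S \<Longrightarrow> \<exists>u' v'. set u' \<subseteq> S \<and> set v' \<subseteq> S \<and> equivp R (u @ v') (v @ u')"
proof (induction u arbitrary: v)
  case Nil
  have "set [] \<subseteq> S \<and> set v \<subseteq> S \<and> equivp R ([] @ v) (v @ [])" using Nil.prems by (simp add: equivp.eq_refl)
  then show ?case by blast
next
  case (Cons s u)
  obtain a' v1 where a': "a' \<in> S'" "set v1 \<subseteq> S" "equivp R ([s] @ v1) (v @ a')"
    using oreA[OF S1 S2 S3, of "[s]" v] Cons.prems S1 by auto
  obtain u2 v2 where h: "set u2 \<subseteq> S" "set v2 \<subseteq> S" "equivp R (u @ v2) (v1 @ u2)"
  proof -
    have "set u \<subseteq> S" using Cons.prems(1) by simp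
    then have "\<exists>u2 v2. set u2 \<subseteq> S \<and> set v2 \<subseteq> S \<and> equivp R (u @ v2) (v1 @ u2)" using Cons.IH[of v1] a'(2) by blast
    then show ?thesis using that by blast
  qed
  have "equivp R ([s] @ u @ v2) ([s] @ v1 @ u2)" using eq_appL[OF h(3), of "[s]"] by simp
  moreover have "equivp R ([s] @ v1 @ u2) (v @ a' @ u2)" using eq_appR[OF a'(3), of u2] by simp
  ultimately have "equivp R ((s # u) @ v2) (v @ a' @ u2)" by (auto intro: equivp.eq_trans)
  moreover have "set (a' @ u2) \<subseteq> S" using a' h S2 by auto
  ultimately show ?case using h by blast
qed

lemma ore:
  assumes Er: "cond_Er S R"
  shows "set u \<subseteq> S \<Longrightarrow> set v \<subseteq> S \<Longrightarrow> \<exists>u' v'. set u' \<subseteq> S \<and> set v' \<subseteq> S \<and> equivp R (u @ v') (v @ u')"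
proof -
  obtain S' where S1: "\<forall>s \<in> S. [s] \<in> S'" and S2: "\<forall>u \<in> S'. set u \<subseteq> S"
    and S3: "\<forall>u \<in> S'. \<forall>v \<in> S'. \<exists>u' \<in> S'. \<exists>v' \<in> S'. rrev S R (ninv (u @ v') @ pos (v @ u')) []"
    using Er unfolding cond_Er_def by blast
  have S3': "\<forall>u \<in> S'. \<forall>v \<in> S'. \<exists>u' \<in> S'. \<exists>v' \<in> S'. equivp R (u @ v') (v @ u')"
  proof (intro ballI)
    fix u v assume "u \<in> S'" "v \<in> S'"
    then obtain u' v' where "u' \<in> S'" "v' \<in> S'" "rrev S R (ninv (u @ v') @ pos (v @ u')) (pos [] @ ninv [])"
      using S3 by fastforce
    then show "\<exists>u' \<in> S'. \<exists>v' \<in> S'. equivp R (u @ v') (v @ u')" using rrev_sound_pos by fastforce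
  qed
  show "set u \<subseteq> S \<Longrightarrow> set v \<subseteq> S \<Longrightarrow> ?thesis" using oreB[OF S1 S2 S3'] by blast
qed

lemma rev_exists:
  assumes rc: "r_complete S R" and Er: "cond_Er S R"
  shows "fst ` set w \<subseteq> S \<Longrightarrow> \<exists>a b. set a \<subseteq> S \<and> set b \<subseteq> S \<and> rrev S R w (pos a @ ninv b)"
proof (induction w)
  case Nil then show ?case by (auto simp: rrev_def intro!: exI[of _ "[]"])
next
  case (Cons l w)
  obtain s bb where l: "l = (s, bb)" by fastforce
  obtain a b where ab: "set a \<subseteq> S" "set b \<subseteq> S" "rrev S R w (pos a @ ninv b)" using Cons by auto
  have s: "s \<in> S" using Cons.prems l by auto
  have r1: "rrev S R (l # w) (l # pos a @ ninv b)" using rrev_ctx[OF ab(3), of "[l]" "[]"] by simp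
  show ?case
  proof (cases bb)
    case True
    have "set (s # a) \<subseteq> S \<and> set b \<subseteq> S \<and> rrev S R (l # w) (pos (s # a) @ ninv b)" using r1 l True ab s by simp
    then show ?thesis by blast
  next
    case False
    obtain u' v' where o: "set u' \<subseteq> S" "set v' \<subseteq> S" "equivp R ([s] @ v') (a @ u')" using ore[OF Er, of "[s]" a] s ab by auto
    obtain u'' v'' ww where h: "set u'' \<subseteq> S" "set v'' \<subseteq> S" "rrev S R (ninv [s] @ pos a) (pos v'' @ ninv u'')"
      using rc o s ab unfolding r_complete_def by (metis empty_subsetI insert_subset list.set(1) list.set(2))
    have "rrev S R (ninv [s] @ pos a @ ninv b) (pos v'' @ ninv u'' @ ninv b)"
      using rrev_ctx[OF h(3), of "[]" "ninv b"] by simp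
    then have "rrev S R (l # w) (pos v'' @ ninv (b @ u''))" using r1 l False by (simp add: rrev_trans)
    moreover have "set (b @ u'') \<subseteq> S" using h ab by simp
    ultimately show ?thesis using h(2) by blast
  qed
qed



definition ore_prop :: "'a set \<Rightarrow> ('a list \<times> 'a list) set \<Rightarrow> bool" where
  "ore_prop S R \<longleftrightarrow> (\<forall>u v. set u \<subseteq> S \<longrightarrow> set v \<subseteq> S \<longrightarrow>
     (\<exists>u' v'. set u' \<subseteq> S \<and> set v' \<subseteq> S \<and> equivp R (u @ v') (v @ u')))"

definition sim :: "'a set \<Rightarrow> ('a list \<times> 'a list) set \<Rightarrow> 'a list \<Rightarrow> 'a list \<Rightarrow> 'a list \<Rightarrow> 'a list \<Rightarrow> bool" where
  "sim S R a b a' b' \<longleftrightarrow> (\<exists>c c'. set c \<subseteq> S \<and> set c' \<subseteq> S \<and> equivp R (a @ c) (a' @ c') \<and> equivp R (b @ c) (b' @ c'))"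

definition cls :: "'a set \<Rightarrow> ('a list \<times> 'a list) set \<Rightarrow> 'a list \<Rightarrow> 'a list \<Rightarrow> 'a list \<Rightarrow> 'a list \<Rightarrow> bool" where
  "cls S R a0 b0 = (\<lambda>a b. set a \<subseteq> S \<and> set b \<subseteq> S \<and> sim S R a b a0 b0)"

fun Frac :: "'a set \<Rightarrow> ('a list \<times> 'a list) set \<Rightarrow> 'a sword \<Rightarrow> 'a list \<Rightarrow> 'a list \<Rightarrow> bool" where
  "Frac S R [] = cls S R [] []"
| "Frac S R ((s, bb) # w) = (\<lambda>a b. set a \<subseteq> S \<and> set b \<subseteq> S \<and>
     (\<exists>a' b'. Frac S R w a' b' \<and> (if bb then sim S R (s # a') b' a b else sim S R a' b' (s # a) b)))"

lemma sim_refl: "sim S R a b a b"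
  unfolding sim_def by (auto intro!: exI[of _ "[]"] equivp.eq_refl)

lemma sim_sym: "sim S R a b a' b' \<Longrightarrow> sim S R a' b' a b"
  unfolding sim_def by (meson equivp.eq_sym)

lemma sim_trans:
  assumes o: "ore_prop S R" and h1: "sim S R a b a' b'" and h2: "sim S R a' b' a'' b''"
  shows "sim S R a b a'' b''"
proof -
  obtain c c' where c: "set c \<subseteq> S" "set c' \<subseteq> S" "equivp R (a @ c) (a' @ c')" "equivp R (b @ c) (b' @ c')"
    using h1 unfolding sim_def by blast
  obtain d d' where d: "set d \<subseteq> S" "set d' \<subseteq> S" "equivp R (a' @ d) (a'' @ d')" "equivp R (b' @ d) (b'' @ d')"
    using h2 unfolding sim_def by blast
  obtain e f where ef: "set e \<subseteq> S" "set f \<subseteq> S" "equivp R (c' @ e) (d @ f)"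
    using o c(2) d(1) unfolding ore_prop_def by blast
  have A: "equivp R (a @ c @ e) (a'' @ d' @ f)"
  proof -
    have 1: "equivp R (a @ c @ e) (a' @ c' @ e)" using eq_appR[OF c(3), of e] by simp
    have 2: "equivp R (a' @ c' @ e) (a' @ d @ f)" using eq_appL[OF ef(3), of a'] by simp
    have 3: "equivp R (a' @ d @ f) (a'' @ d' @ f)" using eq_appR[OF d(3), of f] by simp
    show ?thesis using 1 2 3 by (meson equivp.eq_trans)
  qed
  have B: "equivp R (b @ c @ e) (b'' @ d' @ f)"
  proof -
    have 1: "equivp R (b @ c @ e) (b' @ c' @ e)" using eq_appR[OF c(4), of e] by simp
    have 2: "equivp R (b' @ c' @ e) (b' @ d @ f)" using eq_appL[OF ef(3), of b'] by simp
    have 3: "equivp R (b' @ d @ f) (b'' @ d' @ f)" using eq_appR[OF d(4), of f] by simp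
    show ?thesis using 1 2 3 by (meson equivp.eq_trans)
  qed
  have "set (c @ e) \<subseteq> S" "set (d' @ f) \<subseteq> S" using c ef d by auto
  then show ?thesis unfolding sim_def using A B by (metis append.assoc)
qed

lemma sim_cons: "sim S R a b a' b' \<Longrightarrow> sim S R (s # a) b (s # a') b'"
  unfolding sim_def using eq_appL[of R _ _ "[s]"] by (metis append_Cons append_Nil)

lemma sim_uncons:
  assumes pp: "positive_presentation S R" and rc: "r_complete S R" and C: "cond_C S R"
    and s: "s \<in> S" and a: "set a \<subseteq> S" and a': "set a' \<subseteq> S"
    and h: "sim S R (s # a) b (s # a') b'"
  shows "sim S R a b a' b'"
proof -
  obtain c c' where c: "set c \<subseteq> S" "set c' \<subseteq> S" "equivp R (s # a @ c) (s # a' @ c')" "equivp R (b @ c) (b' @ c')"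
    using h unfolding sim_def by auto
  have "equivp R (a @ c) (a' @ c')" using lcancel1[OF pp rc C s _ _ c(3)] a a' c by auto
  then show ?thesis unfolding sim_def using c by blast
qed

lemma cls_eq: "ore_prop S R \<Longrightarrow> sim S R a0 b0 a1 b1 \<Longrightarrow> cls S R a0 b0 = cls S R a1 b1"
  unfolding cls_def by (intro ext) (meson sim_sym sim_trans)

lemma cls_mem: "set a0 \<subseteq> S \<Longrightarrow> set b0 \<subseteq> S \<Longrightarrow> cls S R a0 b0 a0 b0"
  unfolding cls_def by (simp add: sim_refl)

lemma LT:
  assumes o: "ore_prop S R" and F: "Frac S R w = cls S R a0 b0" and a0: "set a0 \<subseteq> S" and b0: "set b0 \<subseteq> S"
  shows "Frac S R ((s, True) # w) = cls S R (s # a0) b0"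
proof (intro ext iffI)
  fix a b
  assume "Frac S R ((s, True) # w) a b"
  then obtain a' b' where h: "set a \<subseteq> S" "set b \<subseteq> S" "cls S R a0 b0 a' b'" "sim S R (s # a') b' a b"
    using F by auto
  have "sim S R (s # a') b' (s # a0) b0" using h(3) unfolding cls_def by (simp add: sim_cons)
  then have "sim S R a b (s # a0) b0" using h(4) o by (meson sim_sym sim_trans)
  then show "cls S R (s # a0) b0 a b" using h unfolding cls_def by simp
next
  fix a b
  assume h: "cls S R (s # a0) b0 a b"
  then have "set a \<subseteq> S" "set b \<subseteq> S" "sim S R (s # a0) b0 a b" unfolding cls_def by (auto intro: sim_sym)
  moreover have "Frac S R w a0 b0" using F cls_mem[OF a0 b0] by simp
  ultimately show "Frac S R ((s, True) # w) a b" by auto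
qed

lemma LF:
  assumes o: "ore_prop S R" and F: "Frac S R w = cls S R a0 b0" and a0: "set a0 \<subseteq> S" and b0: "set b0 \<subseteq> S"
  shows "Frac S R ((s, False) # w) = (\<lambda>a b. set a \<subseteq> S \<and> set b \<subseteq> S \<and> sim S R a0 b0 (s # a) b)"
proof (intro ext iffI)
  fix a b
  assume "Frac S R ((s, False) # w) a b"
  then obtain a' b' where h: "set a \<subseteq> S" "set b \<subseteq> S" "cls S R a0 b0 a' b'" "sim S R a' b' (s # a) b"
    using F by auto
  then show "set a \<subseteq> S \<and> set b \<subseteq> S \<and> sim S R a0 b0 (s # a) b" unfolding cls_def using o
    by (meson sim_sym sim_trans)
next
  fix a b
  assume h: "set a \<subseteq> S \<and> set b \<subseteq> S \<and> sim S R a0 b0 (s # a) b"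
  moreover have "Frac S R w a0 b0" using F cls_mem[OF a0 b0] by simp
  ultimately show "Frac S R ((s, False) # w) a b" by auto
qed

lemma LF_cls:
  assumes pp: "positive_presentation S R" and rc: "r_complete S R" and C: "cond_C S R"
    and o: "ore_prop S R" and F: "Frac S R w = cls S R a0 b0" and a0: "set a0 \<subseteq> S" and b0: "set b0 \<subseteq> S"
    and s: "s \<in> S"
  shows "\<exists>a1 b1. set a1 \<subseteq> S \<and> set b1 \<subseteq> S \<and> Frac S R ((s, False) # w) = cls S R a1 b1"
proof -
  obtain a1 c where ac: "set a1 \<subseteq> S" "set c \<subseteq> S" "equivp R ([s] @ a1) (a0 @ c)"
    using o a0 s unfolding ore_prop_def by (metis empty_subsetI insert_subset list.set(1) list.set(2))
  have K: "sim S R (s # a1) (b0 @ c) a0 b0"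
  proof -
    have "set [] \<subseteq> S \<and> set c \<subseteq> S \<and> equivp R ((s # a1) @ []) (a0 @ c) \<and> equivp R ((b0 @ c) @ []) (b0 @ c)"
      using ac by (simp add: equivp.eq_refl)
    then show ?thesis unfolding sim_def by blast
  qed
  have "Frac S R ((s, False) # w) = cls S R a1 (b0 @ c)"
  proof (unfold LF[OF o F a0 b0], intro ext iffI)
    fix a b
    assume h: "set a \<subseteq> S \<and> set b \<subseteq> S \<and> sim S R a0 b0 (s # a) b"
    then have "sim S R (s # a1) (b0 @ c) (s # a) b" using K o by (meson sim_trans)
    then have "sim S R a1 (b0 @ c) a b" using sim_uncons[OF pp rc C s ac(1)] h by blast
    then show "cls S R a1 (b0 @ c) a b" unfolding cls_def using h by (simp add: sim_sym)
  next
    fix a b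
    assume h: "cls S R a1 (b0 @ c) a b"
    then have "sim S R (s # a1) (b0 @ c) (s # a) b" unfolding cls_def by (simp add: sim_sym sim_cons)
    then have "sim S R a0 b0 (s # a) b" using K o by (meson sim_sym sim_trans)
    then show "set a \<subseteq> S \<and> set b \<subseteq> S \<and> sim S R a0 b0 (s # a) b" using h unfolding cls_def by simp
  qed
  then show ?thesis using ac b0 by (metis set_append sup.bounded_iff)
qed

lemma Frac_cls:
  assumes pp: "positive_presentation S R" and rc: "r_complete S R" and C: "cond_C S R" and o: "ore_prop S R"
  shows "fst ` set w \<subseteq> S \<Longrightarrow> \<exists>a0 b0. set a0 \<subseteq> S \<and> set b0 \<subseteq> S \<and> Frac S R w = cls S R a0 b0"
proof (induction w)
  case Nil then show ?case by (auto intro!: exI[of _ "[]"])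
next
  case (Cons l w)
  obtain s bb where l: "l = (s, bb)" by fastforce
  have s: "s \<in> S" using Cons.prems l by auto
  have w: "fst ` set w \<subseteq> S" using Cons.prems by simp
  obtain a0 b0 where h: "set a0 \<subseteq> S" "set b0 \<subseteq> S" "Frac S R w = cls S R a0 b0" using Cons.IH[OF w] by meson
  show ?case
  proof (cases bb)
    case True
    have e: "Frac S R ((s, True) # w) = cls S R (s # a0) b0" using LT[OF o h(3) h(1,2)] .
    have a: "set (s # a0) \<subseteq> S" using s h(1) by simp
    have bt: "bb = True" using True by simp
    show ?thesis unfolding l bt by (rule exI[of _ "s # a0"], rule exI[of _ b0], intro conjI a h(2) e)
  next
    case False
    have bt: "bb = False" using False by simp
    show ?thesis using LF_cls[OF pp rc C o h(3) h(1,2) s] unfolding l bt .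
  qed
qed

lemma Frac_pos:
  assumes o: "ore_prop S R" and F: "Frac S R y = cls S R a0 b0" and a0: "set a0 \<subseteq> S" and b0: "set b0 \<subseteq> S"
  shows "set u \<subseteq> S \<Longrightarrow> Frac S R (pos u @ y) = cls S R (u @ a0) b0"
proof (induction u)
  case Nil then show ?case using F by simp
next
  case (Cons s u)
  have "Frac S R ((s, True) # (pos u @ y)) = cls S R (s # (u @ a0)) b0"
    using LT[OF o _ _ b0, of "pos u @ y" "u @ a0" s] Cons a0 by simp
  then show ?case by simp
qed

lemma Frac_ctx: "Frac S R z1 = Frac S R z2 \<Longrightarrow> Frac S R (x @ z1) = Frac S R (x @ z2)"
proof (induction x)
  case Nil then show ?case by simp
next
  case (Cons l x)
  obtain s bb where "l = (s, bb)" by fastforce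
  then show ?case using Cons by simp
qed

lemma Frac_cancel1:
  assumes pp: "positive_presentation S R" and rc: "r_complete S R" and C: "cond_C S R" and o: "ore_prop S R"
    and y: "fst ` set y \<subseteq> S" and s: "s \<in> S"
  shows "Frac S R ((s, True) # (s, False) # y) = Frac S R y"
proof -
  obtain a0 b0 where h: "set a0 \<subseteq> S" "set b0 \<subseteq> S" "Frac S R y = cls S R a0 b0"
    using Frac_cls[OF pp rc C o y] by blast
  obtain a1 b1 where h1: "set a1 \<subseteq> S" "set b1 \<subseteq> S" "Frac S R ((s, False) # y) = cls S R a1 b1"
    using LF_cls[OF pp rc C o h(3) h(1,2) s] by blast
  have E: "cls S R a1 b1 = (\<lambda>a b. set a \<subseteq> S \<and> set b \<subseteq> S \<and> sim S R a0 b0 (s # a) b)"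
    using trans[OF h1(3)[symmetric] LF[OF o h(3) h(1,2), of s]] .
  have "cls S R a1 b1 a1 b1" using cls_mem[OF h1(1,2)] .
  then have "sim S R a0 b0 (s # a1) b1" unfolding E by simp
  then have "cls S R (s # a1) b1 = cls S R a0 b0" using cls_eq[OF o] sim_sym by blast
  then show ?thesis using LT[OF o h1(3) h1(1,2), of s] h(3) by simp
qed

lemma Frac_cancel2:
  assumes pp: "positive_presentation S R" and rc: "r_complete S R" and C: "cond_C S R" and o: "ore_prop S R"
    and y: "fst ` set y \<subseteq> S" and s: "s \<in> S"
  shows "Frac S R ((s, False) # (s, True) # y) = Frac S R y"
proof -
  obtain a0 b0 where h: "set a0 \<subseteq> S" "set b0 \<subseteq> S" "Frac S R y = cls S R a0 b0"
    using Frac_cls[OF pp rc C o y] by blast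
  have T: "Frac S R ((s, True) # y) = cls S R (s # a0) b0" using LT[OF o h(3) h(1,2)] .
  have "Frac S R ((s, False) # (s, True) # y) = (\<lambda>a b. set a \<subseteq> S \<and> set b \<subseteq> S \<and> sim S R (s # a0) b0 (s # a) b)"
    using LF[OF o T _ h(2)] h(1) s by simp
  also have "\<dots> = cls S R a0 b0"
  proof (intro ext iffI)
    fix a b assume "set a \<subseteq> S \<and> set b \<subseteq> S \<and> sim S R (s # a0) b0 (s # a) b"
    then show "cls S R a0 b0 a b" unfolding cls_def using sim_uncons[OF pp rc C s h(1)] by (meson sim_sym)
  next
    fix a b assume "cls S R a0 b0 a b"
    then show "set a \<subseteq> S \<and> set b \<subseteq> S \<and> sim S R (s # a0) b0 (s # a) b" unfolding cls_def
      by (meson sim_cons sim_sym)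
  qed
  finally show ?thesis using h(3) by simp
qed

lemma Frac_inv:
  assumes pp: "positive_presentation S R" and rc: "r_complete S R" and C: "cond_C S R" and o: "ore_prop S R"
  shows "equivpm S R w w' \<Longrightarrow> (fst ` set w \<subseteq> S \<longleftrightarrow> fst ` set w' \<subseteq> S) \<and> (fst ` set w \<subseteq> S \<longrightarrow> Frac S R w = Frac S R w')"
proof (induction rule: equivpm.induct)
  case (eqpm_refl w) then show ?case by simp
next
  case (eqpm_sym w w') then show ?case by metis
next
  case (eqpm_trans w w' w'') then show ?case by metis
next
  case (eqpm_rel u v x y)
  have st: "set u \<subseteq> S" "set v \<subseteq> S" using pp eqpm_rel unfolding positive_presentation_def by auto
  have "fst ` set y \<subseteq> S \<Longrightarrow> Frac S R (pos u @ y) = Frac S R (pos v @ y)"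
  proof -
    assume y: "fst ` set y \<subseteq> S"
    obtain a0 b0 where h: "set a0 \<subseteq> S" "set b0 \<subseteq> S" "Frac S R y = cls S R a0 b0"
      using Frac_cls[OF pp rc C o y] by blast
    have e: "equivp R (u @ a0) (v @ a0)" using equivp.eq_rel[OF eqpm_rel, of "[]" a0] by simp
    have "sim S R (u @ a0) b0 (v @ a0) b0"
    proof -
      have "set [] \<subseteq> S \<and> set [] \<subseteq> S \<and> equivp R ((u @ a0) @ []) ((v @ a0) @ []) \<and> equivp R (b0 @ []) (b0 @ [])"
        using e by (simp add: equivp.eq_refl)
      then show ?thesis unfolding sim_def by blast
    qed
    then show ?thesis using Frac_pos[OF o h(3) h(1,2)] st cls_eq[OF o] by simp
  qed
  note yy = this
  have A: "fst ` set (x @ pos u @ y) \<subseteq> S \<longleftrightarrow> fst ` set (x @ pos v @ y) \<subseteq> S"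
    using st by (simp add: image_Un)
  have B: "fst ` set (x @ pos u @ y) \<subseteq> S \<longrightarrow> Frac S R (x @ pos u @ y) = Frac S R (x @ pos v @ y)"
  proof
    assume "fst ` set (x @ pos u @ y) \<subseteq> S"
    then have "fst ` set y \<subseteq> S" by (simp add: image_Un)
    then show "Frac S R (x @ pos u @ y) = Frac S R (x @ pos v @ y)" by (rule Frac_ctx[OF yy])
  qed
  show ?case using A B by (rule conjI)
next
  case (eqpm_cancel1 s x y)
  have A: "fst ` set (x @ [(s, True), (s, False)] @ y) \<subseteq> S \<longleftrightarrow> fst ` set (x @ y) \<subseteq> S"
    using eqpm_cancel1 by (simp add: image_Un)
  have B: "fst ` set (x @ [(s, True), (s, False)] @ y) \<subseteq> S \<longrightarrow> Frac S R (x @ [(s, True), (s, False)] @ y) = Frac S R (x @ y)"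
  proof
    assume "fst ` set (x @ [(s, True), (s, False)] @ y) \<subseteq> S"
    then have "fst ` set y \<subseteq> S" by (simp add: image_Un)
    then have "Frac S R ((s, True) # (s, False) # y) = Frac S R y" by (rule Frac_cancel1[OF pp rc C o _ eqpm_cancel1])
    then have "Frac S R (x @ (s, True) # (s, False) # y) = Frac S R (x @ y)" by (rule Frac_ctx)
    then show "Frac S R (x @ [(s, True), (s, False)] @ y) = Frac S R (x @ y)" by (simp only: append_Cons append_Nil)
  qed
  show ?case using A B by (rule conjI)
next
  case (eqpm_cancel2 s x y)
  have A: "fst ` set (x @ [(s, False), (s, True)] @ y) \<subseteq> S \<longleftrightarrow> fst ` set (x @ y) \<subseteq> S"
    using eqpm_cancel2 by (simp add: image_Un)
  have B: "fst ` set (x @ [(s, False), (s, True)] @ y) \<subseteq> S \<longrightarrow> Frac S R (x @ [(s, False), (s, True)] @ y) = Frac S R (x @ y)"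
  proof
    assume "fst ` set (x @ [(s, False), (s, True)] @ y) \<subseteq> S"
    then have "fst ` set y \<subseteq> S" by (simp add: image_Un)
    then have "Frac S R ((s, False) # (s, True) # y) = Frac S R y" by (rule Frac_cancel2[OF pp rc C o _ eqpm_cancel2])
    then have "Frac S R (x @ (s, False) # (s, True) # y) = Frac S R (x @ y)" by (rule Frac_ctx)
    then show "Frac S R (x @ [(s, False), (s, True)] @ y) = Frac S R (x @ y)" by (simp only: append_Cons append_Nil)
  qed
  show ?case using A B by (rule conjI)
qed

lemma ninv_mem: "set u \<subseteq> S \<Longrightarrow> Frac S R (ninv u) [] u"
proof (induction u rule: rev_induct)
  case Nil then show ?case by (simp add: cls_mem)
next
  case (snoc s u)
  have "sim S R [] u [s] (u @ [s])"
  proof -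
    have "set [s] \<subseteq> S \<and> set [] \<subseteq> S \<and> equivp R ([] @ [s]) ([s] @ []) \<and> equivp R (u @ [s]) ((u @ [s]) @ [])"
      using snoc.prems by (simp add: equivp.eq_refl)
    then show ?thesis unfolding sim_def by blast
  qed
  then have "Frac S R ((s, False) # ninv u) [] (u @ [s])" using snoc by auto
  then show ?case by (simp add: ninv_def)
qed

lemma embed:
  assumes pp: "positive_presentation S R" and rc: "r_complete S R" and lc: "l_complete S R"
    and C: "cond_C S R" and o: "ore_prop S R"
    and u: "set u \<subseteq> S" and v: "set v \<subseteq> S" and e: "equivpm S R (pos v @ ninv u) []"
  shows "equivp R v u"
proof -
  have F0: "Frac S R (pos v @ ninv u) = cls S R [] []"
    using Frac_inv[OF pp rc C o e] u v by simp
  obtain a b where h: "set a \<subseteq> S" "set b \<subseteq> S" "Frac S R (ninv u) = cls S R a b"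
    using Frac_cls[OF pp rc C o, of "ninv u"] u by auto
  have "cls S R a b [] u" using ninv_mem[OF u, of R] unfolding h(3) .
  then have "sim S R [] u a b" unfolding cls_def by (simp only: simp_thms)
  then have "cls S R a b = cls S R [] u" by (rule cls_eq[OF o, OF sim_sym])
  then have F1: "Frac S R (ninv u) = cls S R [] u" using h(3) by (rule trans[rotated])
  have z: "set ([]::'a list) \<subseteq> S" by simp
  have "Frac S R (pos v @ ninv u) = cls S R (v @ []) u" by (rule Frac_pos[OF o F1 z u v])
  then have "cls S R v u = cls S R [] []" using F0 by simp
  moreover have "cls S R v u v u" by (rule cls_mem[OF v u])
  ultimately have "cls S R [] [] v u" by (simp only:)
  then obtain c c' where c: "set c \<subseteq> S" "equivp R (v @ c) c'" "equivp R (u @ c) c'"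
    unfolding cls_def sim_def by auto
  have "equivp R (v @ c) (u @ c)" using c by (meson equivp.eq_sym equivp.eq_trans)
  then show ?thesis using rcancel[OF pp lc C c(1) v u] by simp
qed



lemma rrev_nil:
  assumes pp: "positive_presentation S R" and rc: "r_complete S R"
    and u: "set u \<subseteq> S" and v: "set v \<subseteq> S" and e: "equivp R u v"
  shows "rrev S R (ninv u @ pos v) []"
proof -
  have e': "equivp R (u @ []) (v @ [])" using e by simp
  obtain u'' v'' w where h: "rrev S R (ninv u @ pos v) (pos v'' @ ninv u'')"
      "equivp R [] (u'' @ w)" "equivp R [] (v'' @ w)"
    using rc u v e' unfolding r_complete_def by (metis empty_set empty_subsetI)
  have "u'' @ w = []" using eq_nil[OF h(2) pp] by simp
  moreover have "v'' @ w = []" using eq_nil[OF h(3) pp] by simp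
  ultimately show ?thesis using h(1) by simp
qed

lemma lrev_nil:
  assumes pp: "positive_presentation S R" and lc: "l_complete S R"
    and u: "set u \<subseteq> S" and v: "set v \<subseteq> S" and e: "equivp R v u"
  shows "lrev S R (pos v @ ninv u) []"
proof -
  have e': "equivp R ([] @ v) ([] @ u)" using e by simp
  obtain u'' v'' w where h: "lrev S R (pos v @ ninv u) (ninv v'' @ pos u'')"
      "equivp R [] (w @ u'')" "equivp R [] (w @ v'')"
    using lc u v e' unfolding l_complete_def by (metis empty_set empty_subsetI)
  have "w @ u'' = []" using eq_nil[OF h(2) pp] by simp
  moreover have "w @ v'' = []" using eq_nil[OF h(3) pp] by simp
  ultimately show ?thesis using h(1) by simp
qed

theorem proposition7p6:
  fixes S :: "'a set" and R :: "('a list \<times> 'a list) set" and w :: "('a \<times> bool) list"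
  assumes "positive_presentation S R"
    and "complete S R"
    and "cond_C S R"
    and "cond_Er S R"
    and "fst ` set w \<subseteq> S"
  shows "(equivpm S R w [] \<longleftrightarrow>
            (\<exists>u v. set u \<subseteq> S \<and> set v \<subseteq> S \<and> rrev S R w (pos v @ ninv u) \<and>
                   rrev S R (ninv u @ pos v) []))
       \<and> (equivpm S R w [] \<longleftrightarrow>
            (\<exists>u v. set u \<subseteq> S \<and> set v \<subseteq> S \<and> rrev S R w (pos v @ ninv u) \<and>
                   lrev S R (pos v @ ninv u) []))"
proof -
  note pp = assms(1) and C = assms(3) and Er = assms(4) and wS = assms(5)
  have rc: "r_complete S R" and lc: "l_complete S R" using assms(2) unfolding complete_def by auto
  have o: "ore_prop S R" unfolding ore_prop_def using ore[OF Er] by blast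
  have fwd: "\<exists>u v. set u \<subseteq> S \<and> set v \<subseteq> S \<and> rrev S R w (pos v @ ninv u) \<and>
                   rrev S R (ninv u @ pos v) [] \<and> lrev S R (pos v @ ninv u) []"
    if e: "equivpm S R w []"
  proof -
    obtain a b where ab: "set a \<subseteq> S" "set b \<subseteq> S" "rrev S R w (pos a @ ninv b)"
      using rev_exists[OF rc Er wS] by blast
    have "equivpm S R w (pos a @ ninv b)" using rrev_sound[OF pp ab(3)] .
    then have "equivpm S R (pos a @ ninv b) []" using e by (meson equivpm.eqpm_sym equivpm.eqpm_trans)
    then have eq: "equivp R a b" using embed[OF pp rc lc C o ab(2) ab(1)] by blast
    have "rrev S R (ninv b @ pos a) []" using rrev_nil[OF pp rc ab(2) ab(1) equivp.eq_sym[OF eq]] .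
    moreover have "lrev S R (pos a @ ninv b) []" using lrev_nil[OF pp lc ab(2) ab(1) eq] .
    ultimately show ?thesis using ab by blast
  qed
  have bwd2: "equivpm S R w []"
    if "set u \<subseteq> S" "set v \<subseteq> S" "rrev S R w (pos v @ ninv u)" "rrev S R (ninv u @ pos v) []" for u v
  proof -
    have 1: "equivpm S R w (pos v @ ninv u)" using rrev_sound[OF pp that(3)] .
    have 2: "equivpm S R (ninv u @ pos v) []" using rrev_sound[OF pp that(4)] .
    have 3: "equivpm S R (pos v @ ninv u @ [] @ []) (pos v @ ninv u @ (pos v @ ninv v) @ [])"
      using pm_cong[OF equivpm.eqpm_sym[OF pm_pn[OF that(2), of R]], where x="pos v @ ninv u" and y="[]"] by simp
    have 4: "equivpm S R (pos v @ (ninv u @ pos v) @ ninv v) (pos v @ [] @ ninv v)"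
      using pm_cong[OF 2, where x="pos v" and y="ninv v"] .
    have 5: "equivpm S R (pos v @ ninv v) []" using pm_pn[OF that(2)] .
    show ?thesis using 1 3 4 5 by simp (meson equivpm.eqpm_trans)
  qed
  have bwd3: "equivpm S R w []"
    if "set u \<subseteq> S" "set v \<subseteq> S" "rrev S R w (pos v @ ninv u)" "lrev S R (pos v @ ninv u) []" for u v
  proof -
    have 1: "equivpm S R w (pos v @ ninv u)" using rrev_sound[OF pp that(3)] .
    have 2: "equivpm S R (pos v @ ninv u) []" using lrev_sound[OF pp that(4)] .
    show ?thesis using 1 2 by (rule equivpm.eqpm_trans)
  qed
  show ?thesis using fwd bwd2 bwd3 by blast
qed

end
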